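(* Let $\kappa$ be an infinite cardinal. If a graph $G$ is $\kappa$-connected, then $G$ contains a subdivision of $K_\kappa$.
   Context: A graph is a pair $(V,E)$ with $E\subseteq[V]^2$. A graph is $\kappa$-connected if it stays connected after removing any set of fewer than $\kappa$ vertices. $K_\kappa$ is the complete graph on $\kappa$ vertices. A graph $H$ is a subdivision of $K$ if $H$ is obtained from $K$ by replacing edges with paths (internally disjoint paths whose interior vertices are new); $G$ contains a subdivision of $K_\kappa$ if some subgraph of $G$ is such a subdivision. *)

theory Defs
  imports Main
begin

definition graph :: "'a set \<Rightarrow> 'a set set \<Rightarrow> bool" where
  "graph V E \<longleftrightarrow> (\<forall>e\<in>E. e \<subseteq> V \<and> card e = 2)"

definition is_path :: "'a set \<Rightarrow> 'a set set \<Rightarrow> 'a list \<Rightarrow> bool" where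
  "is_path V E p \<longleftrightarrow> p \<noteq> [] \<and> distinct p \<and> set p \<subseteq> V \<and>
     (\<forall>i. Suc i < length p \<longrightarrow> {p ! i, p ! Suc i} \<in> E)"

definition del_vertices :: "'a set \<Rightarrow> 'a set set \<Rightarrow> 'a set \<Rightarrow> 'a set \<times> 'a set set" where
  "del_vertices V E X = (V - X, {e \<in> E. e \<inter> X = {}})"

definition connected_graph :: "'a set \<Rightarrow> 'a set set \<Rightarrow> bool" where
  "connected_graph V E \<longleftrightarrow> V \<noteq> {} \<and>
     (\<forall>u\<in>V. \<forall>v\<in>V. \<exists>p. is_path V E p \<and> hd p = u \<and> last p = v)"

text \<open>kappa-connected, where kappa = |K| is given by a set K: removing any set of
  fewer than kappa vertices leaves a connected graph.\<close>
definition kappa_connected :: "'k set \<Rightarrow> 'a set \<Rightarrow> 'a set set \<Rightarrow> bool" where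
  "kappa_connected K V E \<longleftrightarrow>
     (\<forall>X. X \<subseteq> V \<longrightarrow> ordLess2 (card_of X) (card_of K) \<longrightarrow>
        connected_graph (fst (del_vertices V E X)) (snd (del_vertices V E X)))"

abbreviation interior :: "'a list \<Rightarrow> 'a set" where
  "interior p \<equiv> set (butlast (tl p))"

definition contains_TK :: "'k set \<Rightarrow> 'a set \<Rightarrow> 'a set set \<Rightarrow> bool" where
  "contains_TK K V E \<longleftrightarrow>
     (\<exists>f P. inj_on f K \<and> f ` K \<subseteq> V \<and>
        (\<forall>i\<in>K. \<forall>j\<in>K. i \<noteq> j \<longrightarrow>
            is_path V E (P {i,j}) \<and> {hd (P {i,j}), last (P {i,j})} = {f i, f j} \<and>
            interior (P {i,j}) \<inter> f ` K = {}) \<and>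
        (\<forall>i\<in>K. \<forall>j\<in>K. \<forall>i'\<in>K. \<forall>j'\<in>K. i \<noteq> j \<longrightarrow> i' \<noteq> j' \<longrightarrow> {i,j} \<noteq> {i',j'} \<longrightarrow>
            interior (P {i,j}) \<inter> interior (P {i',j'}) = {}))"

end

theory Submission
  imports Defs
begin

unbundle cardinal_syntax

lemma fin_small: "finite A \<Longrightarrow> infinite (K::'k set) \<Longrightarrow> |A| <o |K|"
  by (metis Field_card_of card_of_Well_order finite_ordLess_infinite)

lemma sub_small: "A \<subseteq> B \<Longrightarrow> |B| <o |K| \<Longrightarrow> |A| <o |K|"
  using card_of_mono1 ordLeq_ordLess_trans by blast

lemma UN_small:
  assumes "infinite (K::'k set)" "|I| <o |K|" "\<And>i. i \<in> I \<Longrightarrow> finite (A i)"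
  shows "|\<Union>i\<in>I. A i| <o |K|"
proof (cases "finite I")
  case True thus ?thesis using assms by (intro fin_small) auto
next
  case False
  have "|\<Union>i\<in>I. A i| \<le>o |I|"
    apply (rule card_of_UNION_ordLeq_infinite[OF False])
    subgoal using card_of_refl ordIso_iff_ordLeq by blast
    subgoal using assms(3) False fin_small ordLess_imp_ordLeq by blast
    done
  thus ?thesis using assms(2) ordLeq_ordLess_trans by blast
qed

lemma Times_small:
  assumes "infinite (K::'k set)" "|D| <o |K|"
  shows "|D \<times> D| <o |K|"
proof (cases "finite D")
  case True thus ?thesis using assms by (intro fin_small) auto
next
  case False
  thus ?thesis using card_of_Times_same_infinite[OF False] assms(2) ordIso_ordLess_trans by blast
qed

lemma Un_small: "infinite (K::'k set) \<Longrightarrow> |A| <o |K| \<Longrightarrow> |B| <o |K| \<Longrightarrow> |A \<union> B| <o |K|"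
  using card_of_Un_ordLess_infinite by blast

lemma interior_sub: "interior p \<subseteq> set p"
  by (metis in_set_butlastD list.set_sel(2) subsetI tl_Nil empty_iff list.set(1))

lemma hd_notin_interior: "distinct p \<Longrightarrow> hd p \<notin> interior p"
  by (cases p) (auto dest: in_set_butlastD)

lemma last_notin_interior: "distinct p \<Longrightarrow> last p \<notin> interior p"
proof (cases p)
  case (Cons a q)
  assume d: "distinct p"
  show ?thesis
  proof (cases "q = []")
    case True thus ?thesis using Cons by simp
  next
    case False
    hence "q = butlast q @ [last q]" by simp
    hence "distinct (butlast q @ [last q])" using d Cons by (metis distinct.simps(2))
    hence "last q \<notin> set (butlast q)" by simp
    thus ?thesis using Cons False by simp
  qed
qed simp

lemma get_path:
  assumes "kappa_connected K V E" "|X| <o |K|" "u \<in> V" "v \<in> V" "u \<notin> X" "v \<notin> X"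
  shows "\<exists>p. is_path V E p \<and> hd p = u \<and> last p = v \<and> set p \<inter> X = {}"
proof -
  have "|X \<inter> V| <o |K|" using sub_small[OF _ assms(2)] by blast
  hence "connected_graph (V - X \<inter> V) {e \<in> E. e \<inter> (X \<inter> V) = {}}"
    using assms(1) unfolding kappa_connected_def del_vertices_def by auto
  then obtain p where p: "is_path (V - X \<inter> V) {e \<in> E. e \<inter> (X \<inter> V) = {}} p" "hd p = u" "last p = v"
    using assms(3-6) unfolding connected_graph_def by blast
  have "is_path V E p" using p(1) unfolding is_path_def by auto
  moreover have "set p \<inter> X = {}" using p(1) unfolding is_path_def by auto
  ultimately show ?thesis using p by blast
qed

lemma V_big:
  assumes "kappa_connected K V E" shows "|K| \<le>o |V|"
proof (rule ccontr)
  assume "\<not> |K| \<le>o |V|"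
  hence "|V| <o |K|" using not_ordLeq_iff_ordLess[OF card_of_Well_order card_of_Well_order] by blast
  hence "connected_graph (V - V) {e \<in> E. e \<inter> V = {}}"
    using assms unfolding kappa_connected_def del_vertices_def by auto
  thus False unfolding connected_graph_def by simp
qed



lemma chain_two: "C \<in> chains A \<Longrightarrow> x \<in> \<Union>C \<Longrightarrow> y \<in> \<Union>C \<Longrightarrow> \<exists>S\<in>C. x \<in> S \<and> y \<in> S"
  unfolding chains_def chain_subset_def by blast

lemma fan:
  assumes inf: "infinite K" and kc: "kappa_connected K V E"
    and W: "|W| <o |K|" and v: "v \<in> V" "v \<notin> W" and I: "|I| <o |K|"
    and g: "\<forall>i\<in>I. g i \<in> V \<and> g i \<in> W"
  shows "\<exists>Q. \<forall>i\<in>I. is_path V E (Q i) \<and> hd (Q i) = v \<and> last (Q i) = g i \<and>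
     interior (Q i) \<inter> W = {} \<and> (\<forall>i'\<in>I. i \<noteq> i' \<longrightarrow> interior (Q i) \<inter> interior (Q i') = {})"
proof -
  define good where "good i q \<longleftrightarrow> is_path V E q \<and> hd q = v \<and> last q = g i \<and> interior q \<inter> W = {}" for i q
  define A where "A = {R. fst ` R \<subseteq> I \<and> (\<forall>x\<in>R. good (fst x) (snd x)) \<and>
     (\<forall>x\<in>R. \<forall>y\<in>R. fst x = fst y \<longrightarrow> x = y) \<and>
     (\<forall>x\<in>R. \<forall>y\<in>R. fst x \<noteq> fst y \<longrightarrow> interior (snd x) \<inter> interior (snd y) = {})}"
  have "\<forall>C\<in>chains A. \<Union>C \<in> A"
  proof
    fix C assume C: "C \<in> chains A"
    hence CA: "C \<subseteq> A" unfolding chains_def by blast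
    have 1: "fst ` \<Union>C \<subseteq> I" using CA unfolding A_def by blast
    have 2: "\<forall>x\<in>\<Union>C. good (fst x) (snd x)" using CA unfolding A_def by blast
    have 3: "\<forall>x\<in>\<Union>C. \<forall>y\<in>\<Union>C. fst x = fst y \<longrightarrow> x = y"
    proof (intro ballI impI)
      fix x y assume "x \<in> \<Union>C" "y \<in> \<Union>C" "fst x = fst y"
      then obtain S where "S \<in> C" "x \<in> S" "y \<in> S" using chain_two[OF C] by blast
      thus "x = y" using CA \<open>fst x = fst y\<close> unfolding A_def by blast
    qed
    have 4: "\<forall>x\<in>\<Union>C. \<forall>y\<in>\<Union>C. fst x \<noteq> fst y \<longrightarrow> interior (snd x) \<inter> interior (snd y) = {}"
    proof (intro ballI impI)
      fix x y assume "x \<in> \<Union>C" "y \<in> \<Union>C" "fst x \<noteq> fst y"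
      then obtain S where "S \<in> C" "x \<in> S" "y \<in> S" using chain_two[OF C] by blast
      thus "interior (snd x) \<inter> interior (snd y) = {}" using CA \<open>fst x \<noteq> fst y\<close> unfolding A_def by blast
    qed
    show "\<Union>C \<in> A" using 1 2 3 4 unfolding A_def by (intro CollectI conjI)
  qed
  then obtain M where MA: "M \<in> A" and Mmax: "\<forall>X\<in>A. M \<subseteq> X \<longrightarrow> X = M"
    using Zorn_Lemma[of A] by blast
  have MI: "fst ` M \<subseteq> I" and Mgood: "\<forall>x\<in>M. good (fst x) (snd x)"
    and Mfun: "\<forall>x\<in>M. \<forall>y\<in>M. fst x = fst y \<longrightarrow> x = y"
    and Mdis: "\<forall>x\<in>M. \<forall>y\<in>M. fst x \<noteq> fst y \<longrightarrow> interior (snd x) \<inter> interior (snd y) = {}"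
    using MA unfolding A_def by blast+
  have dom: "I \<subseteq> fst ` M"
  proof (rule ccontr)
    assume "\<not> I \<subseteq> fst ` M"
    then obtain i0 where i0: "i0 \<in> I" "i0 \<notin> fst ` M" by blast
    have "inj_on fst M" using Mfun unfolding inj_on_def by blast
    hence "|M| \<le>o |I|" using MI card_of_ordLeq[of M I] by blast
    hence Msmall: "|M| <o |K|" using I ordLeq_ordLess_trans by blast
    define Y where "Y = (\<Union>x\<in>M. set (snd x))"
    have "|Y| <o |K|" unfolding Y_def by (rule UN_small[OF inf Msmall]) simp
    hence "|W \<union> Y| <o |K|" using Un_small[OF inf W] by blast
    hence Xs: "|(W \<union> Y) - {v, g i0}| <o |K|" using sub_small[of "(W \<union> Y) - {v, g i0}"] by blast
    obtain p where p: "is_path V E p" "hd p = v" "last p = g i0" "set p \<inter> ((W \<union> Y) - {v, g i0}) = {}"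
      using get_path[OF kc Xs v(1)] g i0(1) by blast
    have dp: "distinct p" using p(1) unfolding is_path_def by blast
    have intp: "x \<in> set p \<and> x \<noteq> v \<and> x \<noteq> g i0" if "x \<in> interior p" for x
      using that interior_sub[of p] hd_notin_interior[OF dp] last_notin_interior[OF dp] p(2,3) by auto
    have intp2: "x \<notin> W \<and> x \<notin> Y" if "x \<in> interior p" for x
    proof -
      have "x \<in> set p" "x \<noteq> v" "x \<noteq> g i0" using intp[OF that] by auto
      thus ?thesis using p(4) by blast
    qed
    have gp: "good i0 p" unfolding good_def using p(1,2,3) intp2 by blast
    have fun': "\<forall>x\<in>insert (i0, p) M. \<forall>y\<in>insert (i0, p) M. fst x = fst y \<longrightarrow> x = y"
    proof (intro ballI impI)
      fix x y assume xy: "x \<in> insert (i0, p) M" "y \<in> insert (i0, p) M" "fst x = fst y"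
      show "x = y"
      proof (cases "x = (i0,p)")
        case True
        hence "fst y = i0" using xy(3) by simp
        have "y \<notin> M"
        proof
          assume "y \<in> M" hence "fst y \<in> fst ` M" by (rule imageI)
          thus False using \<open>fst y = i0\<close> i0(2) by simp
        qed
        hence "y = (i0, p)" using xy(2) by blast
        thus ?thesis using True by simp
      next
        case False
        hence xM: "x \<in> M" using xy(1) by blast
        show ?thesis
        proof (cases "y = (i0,p)")
          case True
          hence "fst x = i0" using xy(3) by simp
          moreover have "fst x \<in> fst ` M" using xM by (rule imageI)
          ultimately show ?thesis using i0(2) by simp
        next
          case False
          hence "y \<in> M" using xy(2) by blast
          thus ?thesis using xM Mfun xy(3) by blast
        qed
      qed
    qed
    have pdis: "interior p \<inter> interior (snd y) = {}" if "y \<in> M" for y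
    proof -
      have "interior (snd y) \<subseteq> set (snd y)" by (rule interior_sub)
      moreover have "set (snd y) \<subseteq> Y" using that unfolding Y_def by blast
      ultimately have "interior (snd y) \<subseteq> Y" by (rule order_trans)
      thus ?thesis using intp2 by blast
    qed
    have dis': "\<forall>x\<in>insert (i0, p) M. \<forall>y\<in>insert (i0, p) M. fst x \<noteq> fst y \<longrightarrow> interior (snd x) \<inter> interior (snd y) = {}"
    proof (intro ballI impI)
      fix x y assume xy: "x \<in> insert (i0, p) M" "y \<in> insert (i0, p) M" "fst x \<noteq> fst y"
      show "interior (snd x) \<inter> interior (snd y) = {}"
      proof (cases "x = (i0,p)")
        case True
        hence "y \<in> M" using xy by auto
        thus ?thesis using True pdis by simp
      next
        case False
        hence xM: "x \<in> M" using xy(1) by blast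
        show ?thesis
        proof (cases "y = (i0,p)")
          case True
          thus ?thesis using pdis[OF xM] by auto
        next
          case False
          hence "y \<in> M" using xy(2) by blast
          thus ?thesis using xM Mdis xy(3) by blast
        qed
      qed
    qed
    have "insert (i0, p) M \<in> A"
      unfolding A_def
    proof (intro CollectI conjI)
      show "fst ` insert (i0, p) M \<subseteq> I" using MI i0 by auto
      show "\<forall>x\<in>insert (i0, p) M. good (fst x) (snd x)" using Mgood gp by auto
    qed (rule fun', rule dis')
    moreover have "(i0, p) \<notin> M" using i0(2) by (metis fst_conv image_eqI)
    ultimately show False using Mmax by blast
  qed
  define Q where "Q i = snd (SOME x. x \<in> M \<and> fst x = i)" for i
  have Qx: "\<exists>x\<in>M. fst x = i \<and> Q i = snd x" if "i \<in> I" for i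
  proof -
    have "\<exists>x. x \<in> M \<and> fst x = i" using dom that by force
    from someI_ex[OF this] show ?thesis unfolding Q_def by blast
  qed
  show ?thesis
  proof (intro exI ballI conjI impI)
    fix i assume i: "i \<in> I"
    then obtain x where x: "x \<in> M" "fst x = i" "Q i = snd x" using Qx by blast
    show "is_path V E (Q i)" "hd (Q i) = v" "last (Q i) = g i" "interior (Q i) \<inter> W = {}"
      using Mgood x unfolding good_def by auto
    fix i' assume "i' \<in> I" "i \<noteq> i'"
    then obtain y where y: "y \<in> M" "fst y = i'" "Q i' = snd y" using Qx by blast
    show "interior (Q i) \<inter> interior (Q i') = {}" using Mdis x y \<open>i \<noteq> i'\<close> by auto
  qed
qed



definition okS :: "'k set \<Rightarrow> 'a set \<Rightarrow> 'a set set \<Rightarrow> (('k \<times> 'a) + ('k set \<times> 'a list)) set \<Rightarrow> bool" where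
"okS K V E S \<longleftrightarrow>
 (\<forall>i x. Inl(i,x) \<in> S \<longrightarrow> i \<in> K \<and> x \<in> V) \<and>
 (\<forall>d y z. Inl(d,y) \<in> S \<longrightarrow> (z,d) \<in> card_of K \<longrightarrow> (\<exists>w. Inl(z,w) \<in> S)) \<and>
 (\<forall>i x i' x'. Inl(i,x) \<in> S \<longrightarrow> Inl(i',x') \<in> S \<longrightarrow> (i = i' \<longleftrightarrow> x = x')) \<and>
 (\<forall>e p. Inr(e,p) \<in> S \<longrightarrow> (\<exists>i j x y. i \<noteq> j \<and> Inl(i,x) \<in> S \<and> Inl(j,y) \<in> S \<and> e = {i,j} \<and>
      is_path V E p \<and> {hd p, last p} = {x,y})) \<and>
 (\<forall>e p p'. Inr(e,p) \<in> S \<longrightarrow> Inr(e,p') \<in> S \<longrightarrow> p = p') \<and>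
 (\<forall>e p e' p'. Inr(e,p) \<in> S \<longrightarrow> Inr(e',p') \<in> S \<longrightarrow> e \<noteq> e' \<longrightarrow> interior p \<inter> interior p' = {}) \<and>
 (\<forall>e p i x. Inr(e,p) \<in> S \<longrightarrow> Inl(i,x) \<in> S \<longrightarrow> x \<notin> interior p) \<and>
 (\<forall>i x j y. Inl(i,x) \<in> S \<longrightarrow> Inl(j,y) \<in> S \<longrightarrow> i \<noteq> j \<longrightarrow> (\<exists>p. Inr({i,j},p) \<in> S))"

lemma okS_1: "okS K V E S \<Longrightarrow> Inl(i,x) \<in> S \<Longrightarrow> i \<in> K \<and> x \<in> V"
  unfolding okS_def by (elim conjE) blast
lemma okS_2: "okS K V E S \<Longrightarrow> Inl(d,y) \<in> S \<Longrightarrow> (z,d) \<in> card_of K \<Longrightarrow> \<exists>w. Inl(z,w) \<in> S"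
  unfolding okS_def by (elim conjE) blast
lemma okS_3: "okS K V E S \<Longrightarrow> Inl(i,x) \<in> S \<Longrightarrow> Inl(i',x') \<in> S \<Longrightarrow> (i = i' \<longleftrightarrow> x = x')"
  unfolding okS_def by (elim conjE) blast
lemma okS_4: "okS K V E S \<Longrightarrow> Inr(e,p) \<in> S \<Longrightarrow> \<exists>i j x y. i \<noteq> j \<and> Inl(i,x) \<in> S \<and> Inl(j,y) \<in> S \<and> e = {i,j} \<and>
      is_path V E p \<and> {hd p, last p} = {x,y}"
  unfolding okS_def by (elim conjE) blast
lemma okS_5: "okS K V E S \<Longrightarrow> Inr(e,p) \<in> S \<Longrightarrow> Inr(e,p') \<in> S \<Longrightarrow> p = p'"
  unfolding okS_def by (elim conjE) blast
lemma okS_6: "okS K V E S \<Longrightarrow> Inr(e,p) \<in> S \<Longrightarrow> Inr(e',p') \<in> S \<Longrightarrow> e \<noteq> e' \<Longrightarrow> interior p \<inter> interior p' = {}"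
  unfolding okS_def by (elim conjE) blast
lemma okS_7: "okS K V E S \<Longrightarrow> Inr(e,p) \<in> S \<Longrightarrow> Inl(i,x) \<in> S \<Longrightarrow> x \<notin> interior p"
  unfolding okS_def by (elim conjE) meson
lemma okS_8: "okS K V E S \<Longrightarrow> Inl(i,x) \<in> S \<Longrightarrow> Inl(j,y) \<in> S \<Longrightarrow> i \<noteq> j \<Longrightarrow> \<exists>p. Inr({i,j},p) \<in> S"
  unfolding okS_def by (elim conjE) meson

lemma okS_chain:
  assumes C: "C \<in> chains {S. okS K V E S}"
  shows "okS K V E (\<Union>C)"
proof -
  have ok: "okS K V E S" if "S \<in> C" for S using C that unfolding chains_def by blast
  have two: "\<exists>S\<in>C. a \<in> S \<and> b \<in> S" if "a \<in> \<Union>C" "b \<in> \<Union>C" for a b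
    using chain_two[OF C that] .
  have c1: "i \<in> K \<and> x \<in> V" if h: "Inl(i,x) \<in> \<Union>C" for i x
  proof -
    obtain S where S: "S \<in> C" "Inl(i,x) \<in> S" using h by blast
    show ?thesis using okS_1[OF ok[OF S(1)] S(2)] .
  qed
  have c2: "\<exists>w. Inl(z,w) \<in> \<Union>C" if h: "Inl(d,y) \<in> \<Union>C" "(z,d) \<in> card_of K" for d y z
  proof -
    obtain S where S: "S \<in> C" "Inl(d,y) \<in> S" using h by blast
    then obtain w where "Inl(z,w) \<in> S" using okS_2[OF ok[OF S(1)] S(2) h(2)] by blast
    thus ?thesis using S by blast
  qed
  have c3: "i = i' \<longleftrightarrow> x = x'" if h: "Inl(i,x) \<in> \<Union>C" "Inl(i',x') \<in> \<Union>C" for i x i' x'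
  proof -
    obtain S where S: "S \<in> C" "Inl(i,x) \<in> S" "Inl(i',x') \<in> S" using two[OF h] by blast
    show ?thesis using okS_3[OF ok[OF S(1)] S(2,3)] .
  qed
  have c4: "\<exists>i j x y. i \<noteq> j \<and> Inl(i,x) \<in> \<Union>C \<and> Inl(j,y) \<in> \<Union>C \<and> e = {i,j} \<and>
      is_path V E p \<and> {hd p, last p} = {x,y}" if h: "Inr(e,p) \<in> \<Union>C" for e p
  proof -
    obtain S where S: "S \<in> C" "Inr(e,p) \<in> S" using h by blast
    then obtain i j x y where "i \<noteq> j \<and> Inl(i,x) \<in> S \<and> Inl(j,y) \<in> S \<and> e = {i,j} \<and>
      is_path V E p \<and> {hd p, last p} = {x,y}" using okS_4[OF ok[OF S(1)] S(2)] by blast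
    thus ?thesis using S(1) by blast
  qed
  have c5: "p = p'" if h: "Inr(e,p) \<in> \<Union>C" "Inr(e,p') \<in> \<Union>C" for e p p'
  proof -
    obtain S where S: "S \<in> C" "Inr(e,p) \<in> S" "Inr(e,p') \<in> S" using two[OF h] by blast
    show ?thesis using okS_5[OF ok[OF S(1)] S(2,3)] .
  qed
  have c6: "interior p \<inter> interior p' = {}" if h: "Inr(e,p) \<in> \<Union>C" "Inr(e',p') \<in> \<Union>C" "e \<noteq> e'" for e p e' p'
  proof -
    obtain S where S: "S \<in> C" "Inr(e,p) \<in> S" "Inr(e',p') \<in> S" using two[OF h(1,2)] by blast
    show ?thesis using okS_6[OF ok[OF S(1)] S(2,3) h(3)] .
  qed
  have c7: "x \<notin> interior p" if h: "Inr(e,p) \<in> \<Union>C" "Inl(i,x) \<in> \<Union>C" for e p i x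
  proof -
    obtain S where S: "S \<in> C" "Inr(e,p) \<in> S" "Inl(i,x) \<in> S" using two[OF h] by blast
    show ?thesis using okS_7[OF ok[OF S(1)] S(2,3)] .
  qed
  have c8: "\<exists>p. Inr({i,j},p) \<in> \<Union>C" if h: "Inl(i,x) \<in> \<Union>C" "Inl(j,y) \<in> \<Union>C" "i \<noteq> j" for i x j y
  proof -
    obtain S where S: "S \<in> C" "Inl(i,x) \<in> S" "Inl(j,y) \<in> S" using two[OF h(1,2)] by blast
    then obtain p where "Inr({i,j},p) \<in> S" using okS_8[OF ok[OF S(1)] S(2,3) h(3)] by blast
    thus ?thesis using S(1) by blast
  qed
  show ?thesis unfolding okS_def
    by (intro conjI allI impI c2 c4 c5 c6 c7 c8; (use c1 c3 in blast)?)
qed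


lemma okS_extend:
  fixes K :: "'k set" and V :: "'a set" and E :: "'a set set"
  assumes inf: "infinite K" and kc: "kappa_connected K V E" and ok: "okS K V E S"
    and DK0: "{i. \<exists>x. Inl(i,x) \<in> S} \<noteq> K"
  shows "\<exists>S'. okS K V E S' \<and> S \<subseteq> S' \<and> S' \<noteq> S"
proof -
  define D where "D = {i. \<exists>x. Inl(i,x) \<in> S}"
  have inD: "i \<in> D" if "Inl(i,x) \<in> S" for i x using that unfolding D_def by blast
  have DK: "D \<subseteq> K" using okS_1[OF ok] unfolding D_def by blast
  have WO: "well_order_on K |K|" by (rule card_of_well_order_on)
  have wf: "wf ( |K| - Id)" using WO unfolding well_order_on_def by blast
  have tot: "total_on K |K|" using WO unfolding well_order_on_def linear_order_on_def by blast
  have rK: "|K| \<subseteq> K \<times> K" using WO partial_order_onD(4) unfolding well_order_on_def linear_order_on_def by blast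
  obtain x0 where "x0 \<in> K - D" using DK DK0 unfolding D_def by blast
  then obtain m where m: "m \<in> K - D" and mmin: "\<And>y. (y,m) \<in> |K| - Id \<Longrightarrow> y \<notin> K - D"
    using wf unfolding wf_eq_minimal by metis
  have mK: "m \<in> K" and mD: "m \<notin> D" using m by auto
  have below: "z \<in> D" if "(z,m) \<in> |K|" "z \<noteq> m" for z
  proof -
    have "z \<in> K" using that(1) rK by blast
    thus ?thesis using mmin[of z] that by blast
  qed
  have Dsub: "D \<subseteq> underS |K| m"
  proof
    fix d assume d: "d \<in> D"
    then obtain y where y: "Inl(d,y) \<in> S" unfolding D_def by blast
    have dm: "d \<noteq> m" using d mD by blast
    have "(m,d) \<notin> |K|"
    proof
      assume "(m,d) \<in> |K|"
      then obtain w where "Inl(m,w) \<in> S" using okS_2[OF ok y] by blast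
      thus False using mD inD by blast
    qed
    hence "(d,m) \<in> |K|" using tot d DK mK dm unfolding total_on_def by blast
    thus "d \<in> underS |K| m" using dm unfolding underS_def by blast
  qed
  have "|underS |K| m| <o |K|"
    using card_of_underS[OF card_of_Card_order, of m K] mK by (simp add: Field_card_of)
  hence Dsmall: "|D| <o |K|" using sub_small[OF Dsub] by blast
  define f where "f i = (SOME x. Inl(i,x) \<in> S)" for i
  have fS: "Inl(i, f i) \<in> S" if "i \<in> D" for i
  proof -
    have "\<exists>x. Inl(i,x) \<in> S" using that unfolding D_def by blast
    thus ?thesis unfolding f_def by (rule someI_ex)
  qed
  have fval: "x = f i" if "Inl(i,x) \<in> S" for i x
    using okS_3[OF ok that fS[OF inD[OF that]]] by blast
  define P where "P e = (SOME p. Inr(e,p) \<in> S)" for e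
  have Pval: "p = P e" if "Inr(e,p) \<in> S" for e p
  proof -
    have "Inr(e, P e) \<in> S" unfolding P_def using that by (rule someI)
    thus ?thesis using okS_5[OF ok that] by blast
  qed
  have eD: "\<exists>i j. i \<in> D \<and> j \<in> D \<and> e = {i,j}" if h: "Inr(e,p) \<in> S" for e p
  proof -
    obtain i j x y where "Inl(i,x) \<in> S" "Inl(j,y) \<in> S" "e = {i,j}"
      using okS_4[OF ok h] by blast
    thus ?thesis using inD by blast
  qed
  define W where "W = {x. \<exists>i. Inl(i,x) \<in> S} \<union> (\<Union>{set p | p. \<exists>e. Inr(e,p) \<in> S})"
  have W1: "x \<in> W" if "Inl(i,x) \<in> S" for i x using that unfolding W_def by blast
  have W2: "set p \<subseteq> W" if "Inr(e,p) \<in> S" for e p using that unfolding W_def by blast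
  have Wsub: "W \<subseteq> f ` D \<union> (\<Union>ij\<in>D \<times> D. set (P {fst ij, snd ij}))"
  proof
    fix x assume "x \<in> W"
    then consider (a) i where "Inl(i,x) \<in> S" | (b) e p where "Inr(e,p) \<in> S" "x \<in> set p"
      unfolding W_def by blast
    thus "x \<in> f ` D \<union> (\<Union>ij\<in>D \<times> D. set (P {fst ij, snd ij}))"
    proof cases
      case a thus ?thesis using fval inD by blast
    next
      case b
      then obtain i j where ij: "i \<in> D" "j \<in> D" "e = {i,j}" using eD by blast
      have "p = P {fst (i,j), snd (i,j)}" using Pval[OF b(1)] ij(3) by simp
      thus ?thesis using b(2) ij(1,2) by blast
    qed
  qed
  have "|f ` D| <o |K|" using card_of_image[of f D] Dsmall ordLeq_ordLess_trans by blast
  moreover have "|\<Union>ij\<in>D \<times> D. set (P {fst ij, snd ij})| <o |K|"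
    by (rule UN_small[OF inf Times_small[OF inf Dsmall]]) simp
  ultimately have Wsmall: "|W| <o |K|" using Un_small[OF inf] sub_small[OF Wsub] by blast
  obtain v where v: "v \<in> V" "v \<notin> W"
  proof (rule ccontr)
    assume "\<not> thesis"
    hence "V \<subseteq> W" using that by blast
    hence "|V| <o |K|" using card_of_mono1 Wsmall ordLeq_ordLess_trans by blast
    hence "|V| <o |V|" using V_big[OF kc] ordLess_ordLeq_trans by blast
    thus False using ordLess_irreflexive by blast
  qed
  have gW: "\<forall>i\<in>D. f i \<in> V \<and> f i \<in> W" using fS okS_1[OF ok] W1 by blast
  obtain Q where Q: "\<forall>i\<in>D. is_path V E (Q i) \<and> hd (Q i) = v \<and> last (Q i) = f i \<and>
     interior (Q i) \<inter> W = {} \<and> (\<forall>i'\<in>D. i \<noteq> i' \<longrightarrow> interior (Q i) \<inter> interior (Q i') = {})"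
    using fan[OF inf kc Wsmall v Dsmall gW] by blast
  define S' where "S' = S \<union> {Inl(m,v)} \<union> (\<lambda>i. Inr({i,m}, Q i)) ` D"
  have S'l: "Inl(i,x) \<in> S' \<longleftrightarrow> Inl(i,x) \<in> S \<or> (i = m \<and> x = v)" for i x
    unfolding S'_def by auto
  have S'r: "Inr(e,p) \<in> S' \<longleftrightarrow> Inr(e,p) \<in> S \<or> (\<exists>i\<in>D. e = {i,m} \<and> p = Q i)" for e p
    unfolding S'_def by auto
  have mold: "m \<notin> e" if "Inr(e,p) \<in> S" for e p using eD[OF that] mD by blast
  have Qdist: "distinct (Q i)" if "i \<in> D" for i using Q that unfolding is_path_def by blast
  have c1: "i \<in> K \<and> x \<in> V" if h: "Inl(i,x) \<in> S'" for i x
    using h okS_1[OF ok] mK v(1) unfolding S'l by blast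
  have c2: "\<exists>w. Inl(z,w) \<in> S'" if h: "Inl(d,y) \<in> S'" "(z,d) \<in> |K|" for d y z
  proof (cases "Inl(d,y) \<in> S")
    case True
    then obtain w where "Inl(z,w) \<in> S" using okS_2[OF ok True h(2)] by blast
    thus ?thesis unfolding S'l by blast
  next
    case False
    hence "d = m" using h(1) unfolding S'l by blast
    show ?thesis
    proof (cases "z = m")
      case True thus ?thesis unfolding S'l by blast
    next
      case False
      hence "z \<in> D" using below h(2) \<open>d = m\<close> by blast
      thus ?thesis using fS unfolding S'l by blast
    qed
  qed
  have c3: "i = i' \<longleftrightarrow> x = x'" if h: "Inl(i,x) \<in> S'" "Inl(i',x') \<in> S'" for i x i' x'
  proof -
    have A: "i \<noteq> m \<and> x \<noteq> v" if "Inl(i,x) \<in> S" for i x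
      using inD[OF that] W1[OF that] mD v(2) by blast
    show ?thesis
      using h okS_3[OF ok] A unfolding S'l by metis
  qed
  have c4: "\<exists>i j x y. i \<noteq> j \<and> Inl(i,x) \<in> S' \<and> Inl(j,y) \<in> S' \<and> e = {i,j} \<and>
      is_path V E p \<and> {hd p, last p} = {x,y}" if h: "Inr(e,p) \<in> S'" for e p
  proof (cases "Inr(e,p) \<in> S")
    case True
    then obtain i j x y where "i \<noteq> j \<and> Inl(i,x) \<in> S \<and> Inl(j,y) \<in> S \<and> e = {i,j} \<and>
      is_path V E p \<and> {hd p, last p} = {x,y}" using okS_4[OF ok True] by blast
    thus ?thesis unfolding S'l by blast
  next
    case False
    then obtain i where i: "i \<in> D" "e = {i,m}" "p = Q i" using h unfolding S'r by blast
    have "i \<noteq> m" using i(1) mD by blast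
    moreover have "Inl(i, f i) \<in> S'" "Inl(m, v) \<in> S'" using fS[OF i(1)] unfolding S'l by auto
    moreover have "is_path V E p" "{hd p, last p} = {f i, v}" using Q i by auto
    ultimately show ?thesis using i(2) by blast
  qed
  have c5: "p = p'" if h: "Inr(e,p) \<in> S'" "Inr(e,p') \<in> S'" for e p p'
  proof (cases "Inr(e,p) \<in> S")
    case True
    show ?thesis
    proof (cases "Inr(e,p') \<in> S")
      case True2: True
      show ?thesis using okS_5[OF ok True True2] .
    next
      case False
      then obtain i where "i \<in> D" "e = {i,m}" using h(2) unfolding S'r by blast
      thus ?thesis using mold[OF True] by blast
    qed
  next
    case False
    then obtain i where i: "i \<in> D" "e = {i,m}" "p = Q i" using h(1) unfolding S'r by blast
    show ?thesis
    proof (cases "Inr(e,p') \<in> S")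
      case True
      thus ?thesis using mold[OF True] i by blast
    next
      case False
      then obtain i' where i': "i' \<in> D" "e = {i',m}" "p' = Q i'" using h(2) unfolding S'r by blast
      have "i = i'" using i i' mD by (auto simp: doubleton_eq_iff)
      thus ?thesis using i i' by simp
    qed
  qed
  have oldW: "interior p \<subseteq> W" if "Inr(e,p) \<in> S" for e p
    using W2[OF that] interior_sub[of p] by blast
  have c6: "interior p \<inter> interior p' = {}" if h: "Inr(e,p) \<in> S'" "Inr(e',p') \<in> S'" "e \<noteq> e'" for e p e' p'
  proof (cases "Inr(e,p) \<in> S")
    case True
    show ?thesis
    proof (cases "Inr(e',p') \<in> S")
      case True2: True
      show ?thesis using okS_6[OF ok True True2 h(3)] .
    next
      case False
      then obtain i where "i \<in> D" "p' = Q i" using h(2) unfolding S'r by blast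
      thus ?thesis using oldW[OF True] Q by blast
    qed
  next
    case False
    then obtain i where i: "i \<in> D" "e = {i,m}" "p = Q i" using h(1) unfolding S'r by blast
    show ?thesis
    proof (cases "Inr(e',p') \<in> S")
      case True
      thus ?thesis using oldW[OF True] Q i by blast
    next
      case False
      then obtain i' where i': "i' \<in> D" "e' = {i',m}" "p' = Q i'" using h(2) unfolding S'r by blast
      have "i \<noteq> i'" using i i' h(3) by blast
      thus ?thesis using Q i i' by blast
    qed
  qed
  have c7: "x \<notin> interior p" if h: "Inr(e,p) \<in> S'" "Inl(i,x) \<in> S'" for e p i x
  proof (cases "Inr(e,p) \<in> S")
    case True
    show ?thesis
    proof (cases "Inl(i,x) \<in> S")
      case True2: True
      show ?thesis using okS_7[OF ok True True2] .
    next
      case False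
      hence "x = v" using h(2) unfolding S'l by blast
      thus ?thesis using oldW[OF True] v(2) by blast
    qed
  next
    case False
    then obtain j where j: "j \<in> D" "p = Q j" using h(1) unfolding S'r by blast
    show ?thesis
    proof (cases "Inl(i,x) \<in> S")
      case True
      thus ?thesis using W1[OF True] Q j by blast
    next
      case False
      hence "x = v" using h(2) unfolding S'l by blast
      thus ?thesis using hd_notin_interior[OF Qdist[OF j(1)]] Q j by auto
    qed
  qed
  have c8: "\<exists>p. Inr({i,j},p) \<in> S'" if h: "Inl(i,x) \<in> S'" "Inl(j,y) \<in> S'" "i \<noteq> j" for i x j y
  proof (cases "Inl(i,x) \<in> S")
    case True
    show ?thesis
    proof (cases "Inl(j,y) \<in> S")
      case True2: True
      then obtain p where "Inr({i,j},p) \<in> S" using okS_8[OF ok True True2 h(3)] by blast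
      thus ?thesis unfolding S'r by blast
    next
      case False
      hence "j = m" using h(2) unfolding S'l by blast
      thus ?thesis using inD[OF True] unfolding S'r by blast
    qed
  next
    case False
    hence im: "i = m" using h(1) unfolding S'l by blast
    hence "Inl(j,y) \<in> S" using h(2,3) unfolding S'l by blast
    hence "j \<in> D" by (rule inD)
    hence "Inr({j,m}, Q j) \<in> S'" unfolding S'r by blast
    thus ?thesis using im by (auto simp: insert_commute)
  qed
  have "okS K V E S'" unfolding okS_def
    by (intro conjI allI impI c2 c4 c5 c6 c7 c8; (use c1 c3 in blast)?)
  moreover have "S \<subseteq> S'" unfolding S'_def by blast
  moreover have "Inl(m,v) \<in> S'" "Inl(m,v) \<notin> S" using mD inD unfolding S'_def by blast+
  ultimately show ?thesis by blast
qed


theorem mainTheorem6: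
  fixes K :: "'k set" and V :: "'a set" and E :: "'a set set"
  assumes "infinite K"
    and "graph V E"
    and "kappa_connected K V E"
  shows "contains_TK K V E"
proof -
  note inf = assms(1) and kc = assms(3)
  define A where "A = {S :: (('k \<times> 'a) + ('k set \<times> 'a list)) set. okS K V E S}"
  have "\<forall>C\<in>chains A. \<Union>C \<in> A" using okS_chain unfolding A_def by blast
  then obtain M where MA: "M \<in> A" and Mmax: "\<forall>X\<in>A. M \<subseteq> X \<longrightarrow> X = M"
    using Zorn_Lemma[of A] by blast
  have okM: "okS K V E M" using MA unfolding A_def by blast
  have DM: "{i. \<exists>x. Inl(i,x) \<in> M} = K"
  proof (rule ccontr)
    assume "{i. \<exists>x. Inl(i,x) \<in> M} \<noteq> K"
    then obtain S' where "okS K V E S'" "M \<subseteq> S'" "S' \<noteq> M" using okS_extend[OF inf kc okM] by blast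
    thus False using Mmax unfolding A_def by blast
  qed
  define f where "f i = (SOME x. Inl(i,x) \<in> M)" for i
  have fM: "Inl(i, f i) \<in> M" if "i \<in> K" for i
  proof -
    have "\<exists>x. Inl(i,x) \<in> M" using that DM by blast
    thus ?thesis unfolding f_def by (rule someI_ex)
  qed
  have fval: "x = f i" if h: "Inl(i,x) \<in> M" for i x
  proof -
    have "i \<in> K" using okS_1[OF okM h] by blast
    thus ?thesis using okS_3[OF okM h fM] by blast
  qed
  define P where "P e = (SOME p. Inr(e,p) \<in> M)" for e
  have PM: "Inr({i,j}, P {i,j}) \<in> M" if "i \<in> K" "j \<in> K" "i \<noteq> j" for i j
  proof -
    have "\<exists>p. Inr({i,j},p) \<in> M" using okS_8[OF okM fM[OF that(1)] fM[OF that(2)] that(3)] .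
    thus ?thesis unfolding P_def by (rule someI_ex)
  qed
  show ?thesis unfolding contains_TK_def
  proof (intro exI conjI)
    show "inj_on f K"
    proof (rule inj_onI)
      fix i j assume "i \<in> K" "j \<in> K" "f i = f j"
      thus "i = j" using okS_3[OF okM fM fM] by blast
    qed
    show "f ` K \<subseteq> V" using okS_1[OF okM fM] by blast
    show "\<forall>i\<in>K. \<forall>j\<in>K. i \<noteq> j \<longrightarrow> is_path V E (P {i, j}) \<and> {hd (P {i, j}), last (P {i, j})} = {f i, f j} \<and>
        interior (P {i, j}) \<inter> f ` K = {}"
    proof (intro ballI impI conjI)
      fix i j assume ij: "i \<in> K" "j \<in> K" "i \<noteq> j"
      obtain i' j' x y where o: "Inl(i',x) \<in> M" "Inl(j',y) \<in> M" "{i,j} = {i',j'}"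
        "is_path V E (P {i,j})" "{hd (P {i,j}), last (P {i,j})} = {x,y}"
        using okS_4[OF okM PM[OF ij]] by blast
      show "is_path V E (P {i,j})" using o(4) .
      have "x = f i'" "y = f j'" using fval o(1,2) by auto
      thus "{hd (P {i,j}), last (P {i,j})} = {f i, f j}" using o(3,5)
        by (auto simp: doubleton_eq_iff)
      show "interior (P {i,j}) \<inter> f ` K = {}" using okS_7[OF okM PM[OF ij] fM] by blast
    qed
    show "\<forall>i\<in>K. \<forall>j\<in>K. \<forall>i'\<in>K. \<forall>j'\<in>K. i \<noteq> j \<longrightarrow> i' \<noteq> j' \<longrightarrow> {i, j} \<noteq> {i', j'} \<longrightarrow>
        interior (P {i, j}) \<inter> interior (P {i', j'}) = {}"
      using okS_6[OF okM PM PM] by blast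
  qed
qed

end
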